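(* Let $T$ be a tournament and $X=(v_1,\dots,v_k)$, $k\ge2$, a list of distinct vertices of $T$ satisfying the $U$-property. Then $T[\{v_1,\dots,v_k\}]$ is the tournament $U_k$ (with $v_i$ playing the role of the $i$-th vertex of $U_k$).
   Context: A tournament is a digraph with exactly one arc between each pair of distinct vertices; $d^-(v)$ is the in-degree of $v$ in $T$. A list $(v_1,\dots,v_k)$ with $k\ge2$ satisfies the $U$-property if $d^-(v_1)=1$ and, for each $i\in\{2,\dots,k\}$, $(v_i,v_{i-1})\in A(T)$ and $d^-(v_i)=i-1$. $U_k$ is the tournament on $\{v_1,\dots,v_k\}$ with arc set $\{(v_{i+1},v_i): i\in[k-1]\}\cup\{(v_i,v_j): 1\le i<k,\ i+1<j\le k\}$. *)

theory Defs
  imports Main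
begin

definition tournament :: "'a set \<Rightarrow> ('a \<times> 'a) set \<Rightarrow> bool" where
  "tournament V A \<longleftrightarrow> finite V \<and> A \<subseteq> V \<times> V \<and> (\<forall>v. (v, v) \<notin> A) \<and>
     (\<forall>u\<in>V. \<forall>v\<in>V. u \<noteq> v \<longrightarrow> ((u, v) \<in> A \<longleftrightarrow> (v, u) \<notin> A))"

definition indeg :: "'a set \<Rightarrow> ('a \<times> 'a) set \<Rightarrow> 'a \<Rightarrow> nat" where
  "indeg V A v = card {u \<in> V. (u, v) \<in> A}"

text \<open>U-property for a list; the list is 1-indexed in the paper: v_i = xs ! (i - 1).\<close>
definition U_property :: "'a set \<Rightarrow> ('a \<times> 'a) set \<Rightarrow> 'a list \<Rightarrow> bool" where
  "U_property V A xs \<longleftrightarrow> length xs \<ge> 2 \<and>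
     indeg V A (xs ! 0) = 1 \<and>
     (\<forall>i\<in>{2..length xs}. (xs ! (i - 1), xs ! (i - 2)) \<in> A \<and> indeg V A (xs ! (i - 1)) = i - 1)"

definition U_arcs :: "nat \<Rightarrow> (nat \<times> nat) set" where
  "U_arcs k = {(i + 1, i) | i. i \<in> {1..k - 1}} \<union> {(i, j) | i j. 1 \<le> i \<and> i < k \<and> i + 1 < j \<and> j \<le> k}"

end

theory Submission
  imports Defs
begin

lemma tour_anti:
  assumes "tournament V A" "u \<in> V" "v \<in> V" "u \<noteq> v"
  shows "(u, v) \<in> A \<longleftrightarrow> (v, u) \<notin> A"
  using assms unfolding tournament_def by blast

lemma inset:
  fixes x :: "nat \<Rightarrow> 'a"
  assumes tour: "tournament V A" and sub: "x ` {..<k} \<subseteq> V" and inj: "inj_on x {..<k}"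
    and deg0: "indeg V A (x 0) = 1"
    and arc: "\<And>n. n + 1 < k \<Longrightarrow> (x (n+1), x n) \<in> A"
    and deg: "\<And>n. 1 \<le> n \<Longrightarrow> n < k \<Longrightarrow> indeg V A (x n) = n"
  shows "n + 1 < k \<Longrightarrow> {u\<in>V. (u, x n) \<in> A} = x ` ({..<n-1} \<union> {n+1})"
proof (induction n rule: less_induct)
  case (less n)
  have fin: "finite V" using tour unfolding tournament_def by blast
  have sub1: "x ` ({..<n-1} \<union> {n+1}) \<subseteq> {u\<in>V. (u, x n) \<in> A}"
  proof
    fix u assume "u \<in> x ` ({..<n-1} \<union> {n+1})"
    then obtain m where m: "m \<in> {..<n-1} \<union> {n+1}" "u = x m" by blast
    show "u \<in> {u\<in>V. (u, x n) \<in> A}"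
    proof (cases "m = n+1")
      case True
      then show ?thesis using arc[OF less.prems] m sub less.prems by auto
    next
      case False
      hence mlt: "m < n - 1" using m by auto
      have IH: "{u\<in>V. (u, x m) \<in> A} = x ` ({..<m-1} \<union> {m+1})"
        using less.IH[of m] mlt less.prems by auto
      have "x n \<notin> x ` ({..<m-1} \<union> {m+1})"
      proof
        assume "x n \<in> x ` ({..<m-1} \<union> {m+1})"
        then obtain j where j: "j \<in> {..<m-1} \<union> {m+1}" "x n = x j" by blast
        have "j < k" using j mlt less.prems by auto
        hence "j = n" using inj j less.prems unfolding inj_on_def by auto
        thus False using j mlt by auto
      qed
      moreover have "x n \<in> V" using sub less.prems by auto
      ultimately have "x n \<notin> {u\<in>V. (u, x m) \<in> A}" unfolding IH by simp
      hence "(x n, x m) \<notin> A" using \<open>x n \<in> V\<close> by simp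
      moreover have "x n \<noteq> x m"
      proof
        assume "x n = x m"
        hence "n = m" by (rule inj_onD[OF inj]) (use mlt less.prems in auto)
        thus False using mlt by simp
      qed
      moreover have "x n \<in> V" "x m \<in> V" using sub mlt less.prems by auto
      ultimately have "(x m, x n) \<in> A" using tour unfolding tournament_def by blast
      thus ?thesis using m \<open>x m \<in> V\<close> by auto
    qed
  qed
  have injs: "inj_on x ({..<n-1} \<union> {n+1})"
    by (rule inj_on_subset[OF inj]) (use less.prems in auto)
  have "card (x ` ({..<n-1} \<union> {n+1})) = card ({..<n-1} \<union> {n+1})"
    using card_image[OF injs] .
  also have "\<dots> = n - 1 + 1" by simp
  also have "\<dots> = card {u\<in>V. (u, x n) \<in> A}"
  proof (cases "n = 0")
    case True then show ?thesis using deg0 unfolding indeg_def by simp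
  next
    case False then show ?thesis using deg[of n] less.prems unfolding indeg_def by simp
  qed
  finally have c: "card (x ` ({..<n-1} \<union> {n+1})) = card {u\<in>V. (u, x n) \<in> A}" .
  have "finite {u\<in>V. (u, x n) \<in> A}" using fin by auto
  from card_subset_eq[OF this sub1 c] show ?case by (rule sym)
qed

lemma arcs:
  fixes x :: "nat \<Rightarrow> 'a"
  assumes tour: "tournament V A" and sub: "x ` {..<k} \<subseteq> V" and inj: "inj_on x {..<k}"
    and deg0: "indeg V A (x 0) = 1"
    and arc: "\<And>n. n + 1 < k \<Longrightarrow> (x (n+1), x n) \<in> A"
    and deg: "\<And>n. 1 \<le> n \<Longrightarrow> n < k \<Longrightarrow> indeg V A (x n) = n"
    and ab: "a < k" "b < k"
  shows "(x a, x b) \<in> A \<longleftrightarrow> (a = b + 1 \<or> a + 1 < b)"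
proof -
  have P: "\<And>n. n + 1 < k \<Longrightarrow> {u\<in>V. (u, x n) \<in> A} = x ` ({..<n-1} \<union> {n+1})"
  proof -
    fix n assume "n + 1 < k"
    show "{u\<in>V. (u, x n) \<in> A} = x ` ({..<n-1} \<union> {n+1})"
      by (rule inset[OF tour sub inj deg0, where n=n]) (fact arc, fact deg, fact)
  qed
  have irr: "(x a, x a) \<notin> A" using tour unfolding tournament_def by blast
  have inV: "x a \<in> V" "x b \<in> V" using sub ab by auto
  show ?thesis
  proof (cases "b + 1 < k")
    case True
    have S: "{u\<in>V. (u, x b) \<in> A} = x ` ({..<b-1} \<union> {b+1})" using P[OF True] .
    have "(x a, x b) \<in> A \<longleftrightarrow> x a \<in> {u\<in>V. (u, x b) \<in> A}" using inV by simp
    also have "\<dots> \<longleftrightarrow> x a \<in> x ` ({..<b-1} \<union> {b+1})" unfolding S by simp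
    also have "\<dots> \<longleftrightarrow> a \<in> {..<b-1} \<union> {b+1}"
    proof
      assume "x a \<in> x ` ({..<b-1} \<union> {b+1})"
      then obtain j where j: "j \<in> {..<b-1} \<union> {b+1}" "x a = x j" by blast
      have "j < k" using j True by auto
      hence "a = j" using inj_onD[OF inj j(2)] ab by (simp only: lessThan_iff)
      thus "a \<in> {..<b-1} \<union> {b+1}" using j by simp
    qed auto
    finally show ?thesis by auto
  next
    case False
    hence bk: "b = k - 1" using ab by auto
    show ?thesis
    proof (cases "a = b")
      case True then show ?thesis using irr by auto
    next
      case ne: False
      hence alt: "a < b" using ab bk by auto
      have ne2: "x a \<noteq> x b"
      proof
        assume "x a = x b"
        hence "a = b" by (rule inj_onD[OF inj]) (use ab in auto)
        thus False using ne by simp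
      qed
      show ?thesis
      proof (cases "a + 1 = b")
        case True
        have "(x b, x a) \<in> A" using arc[of a] True ab by auto
        hence "(x a, x b) \<notin> A" using tour_anti[OF tour inV(2) inV(1)] ne2 by auto
        then show ?thesis using True by auto
      next
        case False
        have ak: "a + 1 < k" using alt ab by auto
        have S: "{u\<in>V. (u, x a) \<in> A} = x ` ({..<a-1} \<union> {a+1})" using P[OF ak] .
        have "x b \<notin> x ` ({..<a-1} \<union> {a+1})"
        proof
          assume "x b \<in> x ` ({..<a-1} \<union> {a+1})"
          then obtain j where j: "j \<in> {..<a-1} \<union> {a+1}" "x b = x j" by blast
          have "j < k" using j ak by auto
          hence "j = b" using inj_onD[OF inj j(2)] ab by (simp only: lessThan_iff)
          thus False using j alt False by auto
        qed
        hence "x b \<notin> {u\<in>V. (u, x a) \<in> A}" unfolding S by simp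
        hence "(x b, x a) \<notin> A" using inV by simp
        hence "(x a, x b) \<in> A" using tour_anti[OF tour inV ne2] by simp
        then show ?thesis using alt False by auto
      qed
    qed
  qed
qed

theorem mainTheorem17:
  fixes V :: "'a set" and A :: "('a \<times> 'a) set" and xs :: "'a list"
  assumes "tournament V A"
    and "set xs \<subseteq> V"
    and "distinct xs"
    and "U_property V A xs"
  shows "\<forall>i\<in>{1..length xs}. \<forall>j\<in>{1..length xs}.
           (xs ! (i - 1), xs ! (j - 1)) \<in> A \<longleftrightarrow> (i, j) \<in> U_arcs (length xs)"
proof (intro ballI)
  fix i j assume i: "i \<in> {1..length xs}" and j: "j \<in> {1..length xs}"
  let ?x = "\<lambda>n. xs ! n" and ?k = "length xs"
  have U: "?k \<ge> 2" "indeg V A (xs ! 0) = 1"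
    "\<And>i. i \<in> {2..?k} \<Longrightarrow> (xs ! (i - 1), xs ! (i - 2)) \<in> A \<and> indeg V A (xs ! (i - 1)) = i - 1"
    using assms(4) unfolding U_property_def by auto
  have sub: "?x ` {..<?k} \<subseteq> V" using assms(2) nth_mem by fastforce
  have inj: "inj_on ?x {..<?k}" using assms(3) nth_eq_iff_index_eq unfolding inj_on_def by fastforce
  have arc: "(?x (n+1), ?x n) \<in> A" if "n + 1 < ?k" for n
    using U(3)[of "n+2"] that by auto
  have deg: "indeg V A (?x n) = n" if "1 \<le> n" "n < ?k" for n
    using U(3)[of "n+1"] that by auto
  have ij1: "i - 1 < ?k" using i by auto
  have ij2: "j - 1 < ?k" using j by auto
  have "(xs ! (i - 1), xs ! (j - 1)) \<in> A \<longleftrightarrow> (i - 1 = j - 1 + 1 \<or> i - 1 + 1 < j - 1)"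
    by (rule arcs[OF assms(1) sub inj U(2)]) (fact arc, fact deg, fact ij1, fact ij2)
  also have "\<dots> \<longleftrightarrow> (i, j) \<in> U_arcs ?k"
    using i j unfolding U_arcs_def by auto
  finally show "(xs ! (i - 1), xs ! (j - 1)) \<in> A \<longleftrightarrow> (i, j) \<in> U_arcs ?k" .
qed

end
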